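(* Let $n,k$ be positive integers with $n\ge k$. The integer $|u(n,k)|$ is the number of ordered pairs $(\sigma,\tau)$ of permutations of $[n]=\{1,\dots,n\}$, each having $k$ cycles, such that $\min(\sigma)=\min(\tau)$.
   Context: The central factorial numbers of the first kind with even indices $u(n,k)=t(2n,2k)$ satisfy $u(0,0)=1$, $u(n,k)=0$ if $k\notin\{1,\dots,n\}$ (for $(n,k)\ne(0,0)$), and $u(n,k)=u(n-1,k-1)-(n-1)^2u(n-1,k)$ for $n,k\ge1$; equivalently $\prod_{i=0}^{n-1}(x-i^2)=\sum_k u(n,k)x^k$. For a permutation $\sigma$ of $[n]$, $\min(\sigma)$ denotes the set of cyclic minima, i.e. the set of minimal elements of the cycles of $\sigma$. *)

theory Defs
  imports "HOL-Combinatorics.Combinatorics"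
begin

text \<open>Central factorial numbers of the first kind with even indices, u(n,k) = t(2n,2k).\<close>
fun u :: "nat \<Rightarrow> nat \<Rightarrow> int" where
  "u 0 k = (if k = 0 then 1 else 0)"
| "u (Suc n) 0 = 0"
| "u (Suc n) (Suc k) = u n k - (int n)^2 * u n (Suc k)"

definition perm_cycles :: "nat \<Rightarrow> (nat \<Rightarrow> nat) \<Rightarrow> nat set set" where
  "perm_cycles n \<sigma> = (\<lambda>i. orbit \<sigma> i) ` {1..n}"

definition num_cycles :: "nat \<Rightarrow> (nat \<Rightarrow> nat) \<Rightarrow> nat" where
  "num_cycles n \<sigma> = card (perm_cycles n \<sigma>)"

definition cyc_min :: "nat \<Rightarrow> (nat \<Rightarrow> nat) \<Rightarrow> nat set" where
  "cyc_min n \<sigma> = Min ` perm_cycles n \<sigma>"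

end

theory Submission
  imports Defs
begin

lemma orb_basic:
  assumes "\<sigma> permutes {1..n}" "i \<in> {1..(n::nat)}"
  shows "orbit \<sigma> i \<subseteq> {1..n}" "finite (orbit \<sigma> i)" "i \<in> orbit \<sigma> i"
proof -
  show 1: "orbit \<sigma> i \<subseteq> {1..n}" by (rule permutes_orbit_subset[OF assms])
  show "finite (orbit \<sigma> i)" using finite_subset[OF 1] by simp
  show "i \<in> orbit \<sigma> i"
  proof (rule permutation_self_in_orbit)
    show "permutation \<sigma>" unfolding permutation_permutes using assms(1) by auto
  qed
qed

lemma orb_eq:
  assumes "\<sigma> permutes {1..(n::nat)}" "y \<in> orbit \<sigma> x"
  shows "orbit \<sigma> y = orbit \<sigma> x"
proof -
  have "cyclic_on \<sigma> (orbit \<sigma> x)" using cyclic_on_orbit[OF assms(1)] by simp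
  then show ?thesis by (rule orbit_cyclic_eq3[OF _ assms(2)])
qed

lemma min_in:
  assumes "\<sigma> permutes {1..n}" "i \<in> {1..(n::nat)}"
  shows "Min (orbit \<sigma> i) \<in> orbit \<sigma> i"
  using orb_basic[OF assms] by (intro Min_in) auto

lemma cyc_min_sub:
  assumes "\<sigma> permutes {1..n}"
  shows "cyc_min n \<sigma> \<subseteq> {1..n}"
  unfolding cyc_min_def perm_cycles_def
proof (rule subsetI)
  fix x assume "x \<in> Min ` (\<lambda>i. orbit \<sigma> i) ` {1..n}"
  then obtain i where "i \<in> {1..n}" "x = Min (orbit \<sigma> i)" by auto
  then show "x \<in> {1..n}" using min_in[OF assms] orb_basic(1)[OF assms] by blast
qed

lemma num_cycles_eq:
  assumes "\<sigma> permutes {1..n}"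
  shows "num_cycles n \<sigma> = card (cyc_min n \<sigma>)"
proof -
  have "inj_on Min (perm_cycles n \<sigma>)"
  proof (rule inj_onI)
    fix A B assume "A \<in> perm_cycles n \<sigma>" "B \<in> perm_cycles n \<sigma>" "Min A = Min B"
    then obtain i i' where ii: "i \<in> {1..n}" "i' \<in> {1..n}" "A = orbit \<sigma> i" "B = orbit \<sigma> i'"
      unfolding perm_cycles_def by (meson imageE)
    have m1: "Min A \<in> A" using min_in[OF assms ii(1)] ii(3) by simp
    have m2: "Min B \<in> B" using min_in[OF assms ii(2)] ii(4) by simp
    have "orbit \<sigma> (Min A) = A" using orb_eq[OF assms, of "Min A" i] m1 ii(3) by simp
    moreover have "orbit \<sigma> (Min B) = B" using orb_eq[OF assms, of "Min B" i'] m2 ii(4) by simp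
    ultimately show "A = B" using \<open>Min A = Min B\<close> by metis
  qed
  then show ?thesis unfolding num_cycles_def cyc_min_def by (simp add: card_image)
qed

lemma permutes_shrink:
  assumes "\<sigma> permutes {1..Suc n}" "\<sigma> (Suc n) = Suc n"
  shows "\<sigma> permutes {1..n}"
  using assms by (intro permutes_superset[OF assms(1)]) (auto simp: le_Suc_eq)

lemma cyc_min_fixed:
  assumes "\<sigma> permutes {1..n}"
  shows "cyc_min (Suc n) \<sigma> = insert (Suc n) (cyc_min n \<sigma>)"
proof -
  have "\<sigma> (Suc n) = Suc n" using assms by (intro permutes_not_in) auto
  then have "orbit \<sigma> (Suc n) = {Suc n}" by (simp add: orbit_eq_singleton_iff)
  moreover have "{1..Suc n} = insert (Suc n) {1..n}" by auto
  ultimately show ?thesis unfolding cyc_min_def perm_cycles_def by simp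
qed

lemma orbA:
  assumes "\<sigma> j = p" "\<sigma>' = \<sigma> \<circ> transpose j p" "p \<in> orbit \<sigma> p"
    and "y \<in> orbit \<sigma>' x"
  shows "y \<in> orbit \<sigma> x"
  using assms(4)
proof induction
  case base
  show ?case
  proof (cases "x = j")
    case True
    then have "\<sigma>' x = \<sigma> (\<sigma> x)" using assms(1,2) by simp
    then show ?thesis by (metis orbit.base orbit.step)
  next
    case False
    show ?thesis
    proof (cases "x = p")
      case True
      then have "\<sigma>' x = p" using assms(1,2) False by simp
      then show ?thesis using True assms(3) by simp
    next
      case False2: False
      then have "\<sigma>' x = \<sigma> x" using assms(1,2) False by simp
      then show ?thesis by (metis orbit.base)
    qed
  qed
next
  case (step y)
  show ?case
  proof (cases "y = j")
    case True
    then have "\<sigma>' y = \<sigma> (\<sigma> y)" using assms(1,2) by simp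
    then show ?thesis using step by (metis orbit.step)
  next
    case False
    show ?thesis
    proof (cases "y = p")
      case True
      then have "\<sigma>' y = y" using assms(1,2) False by simp
      then show ?thesis using step by simp
    next
      case False2: False
      then have "\<sigma>' y = \<sigma> y" using assms(1,2) False by simp
      then show ?thesis using step by (metis orbit.step)
    qed
  qed
qed

lemma orbB:
  assumes "\<sigma> j = p" "\<sigma>' = \<sigma> \<circ> transpose j p" "\<sigma> p \<noteq> p" "inj \<sigma>" "x \<noteq> p"
    and "y \<in> orbit \<sigma> x"
  shows "(y \<noteq> p \<longrightarrow> y \<in> orbit \<sigma>' x) \<and> (y = p \<longrightarrow> j \<in> orbit \<sigma>' x \<or> j = x)"
  using assms(6)
proof induction
  case base
  show ?case
  proof (cases "\<sigma> x = p")
    case True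
    then have "x = j" using assms(1,4) by (metis injD)
    then show ?thesis using assms(1) by simp
  next
    case False
    then have "x \<noteq> j" using assms(1) by auto
    then have "\<sigma>' x = \<sigma> x" using assms(2,5) by simp
    then show ?thesis using False by (metis orbit.base)
  qed
next
  case (step y)
  show ?case
  proof (cases "\<sigma> y = p")
    case True
    then have yj: "y = j" using assms(1,4) by (metis injD)
    have "y \<noteq> p" using True assms(3) by auto
    then show ?thesis using step yj True by simp
  next
    case False
    show ?thesis
    proof (cases "y = p")
      case True
      have jp: "j \<noteq> p" using assms(1,3) by auto
      have e: "\<sigma> y = \<sigma>' j" using assms(2) True jp by simp
      from step True have "j \<in> orbit \<sigma>' x \<or> j = x" by simp
      then have "\<sigma>' j \<in> orbit \<sigma>' x" by (metis orbit.base orbit.step)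
      then show ?thesis using e False by simp
    next
      case False2: False
      have "y \<noteq> j" using False assms(1) by auto
      then have e: "\<sigma>' y = \<sigma> y" using assms(2) False2 by simp
      from step False2 have "y \<in> orbit \<sigma>' x" by simp
      then have "\<sigma>' y \<in> orbit \<sigma>' x" by (metis orbit.step)
      then show ?thesis using e False by simp
    qed
  qed
qed

lemma Min_insert_big:
  fixes B :: "nat set"
  assumes "finite B" "B \<noteq> {}" "\<forall>b\<in>B. b < p" "B \<subseteq> A" "A \<subseteq> insert p B"
  shows "Min A = Min B"
proof (cases "p \<in> A")
  case True
  then have "A = insert p B" using assms by auto
  moreover have "Min B < p" using assms Min_in by blast
  moreover have "Min (insert p B) = min p (Min B)" using assms(1,2) by simp
  ultimately show ?thesis by simp
next
  case False
  then have "A = B" using assms by auto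
  then show ?thesis by simp
qed

lemma perm_self_orbit:
  assumes "\<sigma> permutes {1..(n::nat)}"
  shows "x \<in> orbit \<sigma> x"
proof (rule permutation_self_in_orbit)
  show "permutation \<sigma>" unfolding permutation_permutes using assms(1) by auto
qed

lemma cyc_min_remove:
  assumes "\<sigma> permutes {1..Suc n}" "\<sigma> (Suc n) \<noteq> Suc n"
  shows "\<sigma> \<circ> transpose (inv \<sigma> (Suc n)) (Suc n) permutes {1..n}"
    and "cyc_min (Suc n) \<sigma> = cyc_min n (\<sigma> \<circ> transpose (inv \<sigma> (Suc n)) (Suc n))"
proof -
  define p where "p = Suc n"
  define j where "j = inv \<sigma> p"
  define \<sigma>' where "\<sigma>' = \<sigma> \<circ> transpose j p"
  have sj: "\<sigma> j = p" unfolding j_def using permutes_inverses(1)[OF assms(1)] by simp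
  have "p \<in> {1..Suc n}" unfolding p_def by simp
  then have "j \<in> {1..Suc n}" using permutes_in_image[OF assms(1), of j] sj by simp
  moreover have "j \<noteq> p" using sj assms(2) p_def by auto
  ultimately have jn: "j \<in> {1..n}" unfolding p_def by auto
  have "\<sigma>' permutes {1..Suc n}" unfolding \<sigma>'_def
    by (rule permutes_compose[OF permutes_swap_id assms(1)]) (use jn p_def in auto)
  moreover have "\<sigma>' p = p" unfolding \<sigma>'_def using sj by simp
  ultimately have P: "\<sigma>' permutes {1..n}" using permutes_shrink p_def by blast
  then show "\<sigma> \<circ> transpose (inv \<sigma> (Suc n)) (Suc n) permutes {1..n}"
    unfolding \<sigma>'_def j_def p_def .
  have pp: "p \<in> orbit \<sigma> p" using perm_self_orbit[OF assms(1)] .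
  have inj: "inj \<sigma>" using permutes_inj[OF assms(1)] .
  have eqMin: "Min (orbit \<sigma> x) = Min (orbit \<sigma>' x)" if x: "x \<in> {1..n}" for x
  proof (rule Min_insert_big)
    show "orbit \<sigma>' x \<subseteq> orbit \<sigma> x" using orbA[OF sj \<sigma>'_def pp] by blast
    have "x \<noteq> p" using x p_def by auto
    then show "orbit \<sigma> x \<subseteq> insert p (orbit \<sigma>' x)"
      using orbB[OF sj \<sigma>'_def _ inj] assms(2) p_def by blast
    show "finite (orbit \<sigma>' x)" "orbit \<sigma>' x \<noteq> {}" using orb_basic[OF P x] by auto
    show "\<forall>b\<in>orbit \<sigma>' x. b < p" using orb_basic(1)[OF P x] p_def by auto
  qed
  have "p \<in> orbit \<sigma> j" using sj by (metis orbit.base)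
  then have opj: "orbit \<sigma> p = orbit \<sigma> j" by (rule orb_eq[OF assms(1)])
  have "cyc_min (Suc n) \<sigma> = Min ` (\<lambda>i. orbit \<sigma> i) ` insert p {1..n}"
    unfolding cyc_min_def perm_cycles_def p_def by (simp add: atLeastAtMostSuc_conv)
  also have "\<dots> = Min ` (\<lambda>i. orbit \<sigma> i) ` {1..n}"
    using opj jn by (simp add: image_insert insert_absorb image_eqI)
  also have "\<dots> = Min ` (\<lambda>i. orbit \<sigma>' i) ` {1..n}"
    unfolding image_image using eqMin by (rule image_cong[OF refl])
  finally show "cyc_min (Suc n) \<sigma> = cyc_min n (\<sigma> \<circ> transpose (inv \<sigma> (Suc n)) (Suc n))"
    unfolding cyc_min_def perm_cycles_def \<sigma>'_def j_def p_def .
qed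

lemma ins_props:
  assumes "\<sigma>' permutes {1..n}" "j \<in> {1..n}"
  defines "\<sigma> \<equiv> \<sigma>' \<circ> transpose j (Suc n)"
  shows "\<sigma> permutes {1..Suc n}" "\<sigma> (Suc n) \<noteq> Suc n" "inv \<sigma> (Suc n) = j"
    "\<sigma> \<circ> transpose j (Suc n) = \<sigma>'"
proof -
  have P': "\<sigma>' permutes {1..Suc n}" using assms(1) by (rule permutes_subset) auto
  show P: "\<sigma> permutes {1..Suc n}" unfolding \<sigma>_def
    by (rule permutes_compose[OF permutes_swap_id P']) (use assms(2) in auto)
  have jne: "j \<noteq> Suc n" using assms(2) by auto
  have "\<sigma>' j \<in> {1..n}" using permutes_in_image[OF assms(1)] assms(2) by simp
  then show "\<sigma> (Suc n) \<noteq> Suc n" unfolding \<sigma>_def using jne by auto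
  have fix': "\<sigma>' (Suc n) = Suc n" using permutes_not_in[OF assms(1)] by simp
  have "\<sigma> j = Suc n" unfolding \<sigma>_def using fix' by simp
  then show "inv \<sigma> (Suc n) = j" using permutes_inv_eq[OF P] by simp
  show "\<sigma> \<circ> transpose j (Suc n) = \<sigma>'" unfolding \<sigma>_def by (simp add: fun_eq_iff)
qed

definition B :: "nat \<Rightarrow> nat set \<Rightarrow> (nat \<Rightarrow> nat) set" where
  "B n M = {\<sigma>. \<sigma> permutes {1..n} \<and> cyc_min n \<sigma> = M}"

definition F :: "nat \<Rightarrow> nat set \<Rightarrow> nat" where
  "F n M = card (B n M)"

lemma finite_B: "finite (B n M)"
  unfolding B_def by (rule finite_subset[OF _ finite_permutations[of "{1..n}"]]) auto

lemma B_empty_if: "Suc n \<in> M \<Longrightarrow> B n M = {}"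
  unfolding B_def using cyc_min_sub by fastforce

lemma F_Suc: "F (Suc n) M = (if Suc n \<in> M then F n (M - {Suc n}) else 0) + n * F n M"
proof -
  define p where "p = Suc n"
  define S1 where "S1 = {\<sigma> \<in> B (Suc n) M. \<sigma> p = p}"
  define S2 where "S2 = {\<sigma> \<in> B (Suc n) M. \<sigma> p \<noteq> p}"
  have split: "B (Suc n) M = S1 \<union> S2" "S1 \<inter> S2 = {}" unfolding S1_def S2_def by auto
  have fin: "finite S1" "finite S2" unfolding S1_def S2_def using finite_B by auto
  have S1eq: "S1 = {\<sigma>. \<sigma> permutes {1..n} \<and> insert p (cyc_min n \<sigma>) = M}"
  proof (intro set_eqI iffI)
    fix \<sigma> assume "\<sigma> \<in> S1"
    then have a: "\<sigma> permutes {1..Suc n}" "\<sigma> p = p" "cyc_min (Suc n) \<sigma> = M"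
      unfolding S1_def B_def by auto
    then have "\<sigma> permutes {1..n}" using permutes_shrink p_def by blast
    then show "\<sigma> \<in> {\<sigma>. \<sigma> permutes {1..n} \<and> insert p (cyc_min n \<sigma>) = M}"
      using cyc_min_fixed a(3) p_def by auto
  next
    fix \<sigma> assume "\<sigma> \<in> {\<sigma>. \<sigma> permutes {1..n} \<and> insert p (cyc_min n \<sigma>) = M}"
    then have a: "\<sigma> permutes {1..n}" "insert p (cyc_min n \<sigma>) = M" by auto
    have "\<sigma> permutes {1..Suc n}" using a(1) by (rule permutes_subset) auto
    moreover have "\<sigma> p = p" using permutes_not_in[OF a(1)] p_def by simp
    ultimately show "\<sigma> \<in> S1" unfolding S1_def B_def using cyc_min_fixed[OF a(1)] a(2) p_def by auto
  qed
  have cS1: "card S1 = (if p \<in> M then F n (M - {p}) else 0)"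
  proof (cases "p \<in> M")
    case True
    have "S1 = B n (M - {p})" unfolding S1eq B_def
    proof (intro set_eqI iffI)
      fix \<sigma> assume "\<sigma> \<in> {\<sigma>. \<sigma> permutes {1..n} \<and> insert p (cyc_min n \<sigma>) = M}"
      then have a: "\<sigma> permutes {1..n}" "insert p (cyc_min n \<sigma>) = M" by auto
      have "p \<notin> cyc_min n \<sigma>" using cyc_min_sub[OF a(1)] p_def by auto
      then show "\<sigma> \<in> {\<sigma>. \<sigma> permutes {1..n} \<and> cyc_min n \<sigma> = M - {p}}" using a by auto
    next
      fix \<sigma> assume "\<sigma> \<in> {\<sigma>. \<sigma> permutes {1..n} \<and> cyc_min n \<sigma> = M - {p}}"
      then show "\<sigma> \<in> {\<sigma>. \<sigma> permutes {1..n} \<and> insert p (cyc_min n \<sigma>) = M}" using True by auto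
    qed
    then show ?thesis using True unfolding F_def by simp
  next
    case False
    then have "S1 = {}" unfolding S1eq by auto
    then show ?thesis using False by simp
  qed
  define g where "g = (\<lambda>(\<sigma>'::nat\<Rightarrow>nat, j::nat). \<sigma>' \<circ> transpose j p)"
  have S2eq: "S2 = g ` (B n M \<times> {1..n})"
  proof (intro set_eqI iffI)
    fix \<sigma> assume "\<sigma> \<in> S2"
    then have a: "\<sigma> permutes {1..Suc n}" "\<sigma> p \<noteq> p" "cyc_min (Suc n) \<sigma> = M"
      unfolding S2_def B_def by auto
    define j where "j = inv \<sigma> p"
    define \<sigma>' where "\<sigma>' = \<sigma> \<circ> transpose j p"
    have P: "\<sigma>' permutes {1..n}" "cyc_min n \<sigma>' = M"
      using cyc_min_remove[OF a(1)] a(2,3) unfolding \<sigma>'_def j_def p_def by auto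
    have sj: "\<sigma> j = p" unfolding j_def using permutes_inverses(1)[OF a(1)] by simp
    have "p \<in> {1..Suc n}" unfolding p_def by simp
    then have "j \<in> {1..Suc n}" using permutes_in_image[OF a(1), of j] sj by simp
    moreover have "j \<noteq> p" using sj a(2) by auto
    ultimately have jn: "j \<in> {1..n}" unfolding p_def by auto
    have "\<sigma> = g (\<sigma>', j)" unfolding g_def \<sigma>'_def by (simp add: fun_eq_iff)
    then show "\<sigma> \<in> g ` (B n M \<times> {1..n})" using P jn unfolding B_def by blast
  next
    fix \<sigma> assume "\<sigma> \<in> g ` (B n M \<times> {1..n})"
    then obtain \<sigma>' j where a: "\<sigma>' permutes {1..n}" "cyc_min n \<sigma>' = M" "j \<in> {1..n}"
      "\<sigma> = \<sigma>' \<circ> transpose j p" unfolding B_def g_def by auto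
    have I: "\<sigma> permutes {1..Suc n}" "\<sigma> (Suc n) \<noteq> Suc n" "inv \<sigma> (Suc n) = j"
      "\<sigma> \<circ> transpose j (Suc n) = \<sigma>'"
      using ins_props[OF a(1,3)] a(4) unfolding p_def by auto
    have "cyc_min (Suc n) \<sigma> = cyc_min n (\<sigma> \<circ> transpose (inv \<sigma> (Suc n)) (Suc n))"
      by (rule cyc_min_remove(2)[OF I(1,2)])
    then have "cyc_min (Suc n) \<sigma> = M" unfolding I(3) I(4) a(2) .
    then show "\<sigma> \<in> S2" unfolding S2_def B_def using I(1,2) p_def by auto
  qed
  have inj: "inj_on g (B n M \<times> {1..n})"
  proof (rule inj_onI)
    fix x y assume "x \<in> B n M \<times> {1..n}" "y \<in> B n M \<times> {1..n}" "g x = g y"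
    then obtain s1 j1 s2 j2 where xy: "x = (s1, j1)" "y = (s2, j2)" "s1 permutes {1..n}"
      "s2 permutes {1..n}" "j1 \<in> {1..n}" "j2 \<in> {1..n}" "s1 \<circ> transpose j1 p = s2 \<circ> transpose j2 p"
      unfolding B_def g_def by auto
    note I1 = ins_props[OF xy(3,5), folded p_def]
    note I2 = ins_props[OF xy(4,6), folded p_def]
    have "j1 = j2" using I1(3) I2(3) xy(7) by simp
    moreover then have "s1 = s2" using I1(4) I2(4) xy(7) by metis
    ultimately show "x = y" using xy by simp
  qed
  have cS2: "card S2 = n * F n M" unfolding S2eq card_image[OF inj] F_def
    by (simp add: card_cartesian_product)
  show ?thesis unfolding F_def split(1) card_Un_disjoint[OF fin split(2)]
    using cS1 cS2 p_def F_def by simp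
qed

lemma F_0: "F 0 M = (if M = {} then 1 else 0)"
proof -
  have "B 0 M = (if M = {} then {id} else {})"
  proof -
    have "cyc_min 0 id = {}" unfolding cyc_min_def perm_cycles_def by simp
    moreover have "\<sigma> permutes {1..0} \<longleftrightarrow> \<sigma> = id" for \<sigma> :: "nat \<Rightarrow> nat" by simp
    ultimately show ?thesis unfolding B_def by auto
  qed
  then show ?thesis unfolding F_def by simp
qed

lemma F_Suc_empty: "F (Suc n) {} = 0"
proof (induction n)
  case 0
  then show ?case using F_Suc[of 0 "{}"] by simp
next
  case (Suc n)
  then show ?case using F_Suc[of "Suc n" "{}"] by simp
qed

definition I :: "nat \<Rightarrow> nat \<Rightarrow> nat set set" where
  "I n k = {M. M \<subseteq> {1..n} \<and> card M = k}"

definition G :: "nat \<Rightarrow> nat \<Rightarrow> nat" where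
  "G n k = (\<Sum>M\<in>I n k. F n M ^ 2)"

lemma finite_I: "finite (I n k)"
  unfolding I_def by (rule finite_subset[of _ "Pow {1..n}"]) auto

lemma G_0: "G 0 k = (if k = 0 then 1 else 0)"
proof -
  have "I 0 k = (if k = 0 then {{}} else {})" unfolding I_def by auto
  then show ?thesis unfolding G_def using F_0 by simp
qed

lemma G_Suc_0: "G (Suc n) 0 = 0"
proof -
  have "M \<in> I (Suc n) 0 \<longleftrightarrow> M = {}" for M
  proof
    assume "M \<in> I (Suc n) 0"
    then have "M \<subseteq> {1..Suc n}" "card M = 0" by (auto simp: I_def)
    moreover then have "finite M" using finite_subset by blast
    ultimately show "M = {}" by simp
  qed (simp add: I_def)
  then have "I (Suc n) 0 = {{}}" by auto
  then show ?thesis unfolding G_def using F_Suc_empty by simp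
qed

lemma G_Suc: "G (Suc n) (Suc k) = G n k + n^2 * G n (Suc k)"
proof -
  define p where "p = Suc n"
  have Ieq: "I (Suc n) (Suc k) = insert p ` I n k \<union> I n (Suc k)"
  proof (intro set_eqI iffI)
    fix M assume "M \<in> I (Suc n) (Suc k)"
    then have a: "M \<subseteq> {1..Suc n}" "card M = Suc k" unfolding I_def by auto
    have fM: "finite M" using a(1) finite_subset by blast
    show "M \<in> insert p ` I n k \<union> I n (Suc k)"
    proof (cases "p \<in> M")
      case True
      then have "M = insert p (M - {p})" by auto
      moreover have "M - {p} \<in> I n k" unfolding I_def using a True fM p_def by auto
      ultimately show ?thesis by blast
    next
      case False
      have "M \<subseteq> {1..n}"
      proof
        fix x assume "x \<in> M"
        then have "x \<in> {1..Suc n}" "x \<noteq> Suc n" using a(1) False p_def by auto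
        then show "x \<in> {1..n}" by auto
      qed
      then have "M \<in> I n (Suc k)" unfolding I_def using a by auto
      then show ?thesis by blast
    qed
  next
    fix M assume "M \<in> insert p ` I n k \<union> I n (Suc k)"
    then show "M \<in> I (Suc n) (Suc k)"
    proof
      assume "M \<in> insert p ` I n k"
      then obtain M' where "M' \<subseteq> {1..n}" "card M' = k" "M = insert p M'" unfolding I_def by auto
      moreover have "p \<notin> M'" using calculation(1) p_def by auto
      moreover have "finite M'" using calculation(1) by (rule finite_subset) simp
      ultimately show ?thesis unfolding I_def p_def by auto
    next
      assume "M \<in> I n (Suc k)"
      then show ?thesis unfolding I_def by auto
    qed
  qed
  have disj: "insert p ` I n k \<inter> I n (Suc k) = {}" unfolding I_def p_def by auto
  have injI: "inj_on (insert p) (I n k)"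
  proof (rule inj_onI)
    fix M1 M2 assume h: "M1 \<in> I n k" "M2 \<in> I n k" "insert p M1 = insert p M2"
    then have "p \<notin> M1" "p \<notin> M2" unfolding I_def p_def by auto
    then show "M1 = M2" using h(3) by (metis Diff_insert_absorb)
  qed
  have s1: "(\<Sum>M\<in>insert p ` I n k. F (Suc n) M ^ 2) = G n k"
    unfolding sum.reindex[OF injI] G_def
  proof (rule sum.cong[OF refl])
    fix M assume "M \<in> I n k"
    then have "p \<notin> M" unfolding I_def p_def by auto
    then have "F (Suc n) (insert p M) = F n M + n * F n (insert p M)"
      using F_Suc[of n "insert p M"] p_def by simp
    moreover have "F n (insert p M) = 0" unfolding F_def using B_empty_if p_def by simp
    ultimately show "((\<lambda>M. F (Suc n) M ^ 2) \<circ> insert p) M = F n M ^ 2" by simp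
  qed
  have s2: "(\<Sum>M\<in>I n (Suc k). F (Suc n) M ^ 2) = n^2 * G n (Suc k)"
    unfolding G_def sum_distrib_left
  proof (rule sum.cong[OF refl])
    fix M assume "M \<in> I n (Suc k)"
    then have "Suc n \<notin> M" unfolding I_def by auto
    then show "F (Suc n) M ^ 2 = n^2 * F n M ^ 2" using F_Suc[of n M] by (simp add: power_mult_distrib)
  qed
  show ?thesis unfolding G_def[of "Suc n"] Ieq
    by (subst sum.union_disjoint) (use finite_I disj s1 s2 in \<open>auto simp: G_def\<close>)
qed

lemma u_G: "u n k = (-1)^(n+k) * int (G n k)"
proof (induction n arbitrary: k)
  case 0
  then show ?case using G_0 by simp
next
  case (Suc n)
  show ?case
  proof (cases k)
    case 0
    then show ?thesis using G_Suc_0 by simp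
  next
    case (Suc k')
    have "u (Suc n) (Suc k') = (-1)^(n+k') * int (G n k') - (int n)^2 * ((-1)^(n + Suc k') * int (G n (Suc k')))"
      using Suc.IH by simp
    also have "\<dots> = (-1)^(n+k') * (int (G n k') + (int n)^2 * int (G n (Suc k')))"
      by (simp add: algebra_simps)
    also have "\<dots> = (-1)^(Suc n + Suc k') * int (G (Suc n) (Suc k'))"
      using G_Suc[of n k'] by simp
    finally show ?thesis using Suc by simp
  qed
qed

lemma pairs_card:
  "card {(\<sigma>, \<tau>). \<sigma> permutes {1..n} \<and> \<tau> permutes {1..n}
            \<and> num_cycles n \<sigma> = k \<and> num_cycles n \<tau> = k \<and> cyc_min n \<sigma> = cyc_min n \<tau>} = G n k"
proof -
  have eq: "{(\<sigma>, \<tau>). \<sigma> permutes {1..n} \<and> \<tau> permutes {1..n}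
            \<and> num_cycles n \<sigma> = k \<and> num_cycles n \<tau> = k \<and> cyc_min n \<sigma> = cyc_min n \<tau>}
     = (\<Union>M\<in>I n k. B n M \<times> B n M)"
  proof (intro set_eqI iffI)
    fix x assume "x \<in> {(\<sigma>, \<tau>). \<sigma> permutes {1..n} \<and> \<tau> permutes {1..n}
            \<and> num_cycles n \<sigma> = k \<and> num_cycles n \<tau> = k \<and> cyc_min n \<sigma> = cyc_min n \<tau>}"
    then obtain s t where a: "x = (s, t)" "s permutes {1..n}" "t permutes {1..n}"
      "num_cycles n s = k" "cyc_min n s = cyc_min n t" by auto
    have "cyc_min n s \<in> I n k" unfolding I_def using cyc_min_sub[OF a(2)] num_cycles_eq[OF a(2)] a(4) by simp
    then show "x \<in> (\<Union>M\<in>I n k. B n M \<times> B n M)" using a unfolding B_def by auto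
  next
    fix x assume "x \<in> (\<Union>M\<in>I n k. B n M \<times> B n M)"
    then obtain M s t where a: "x = (s, t)" "M \<in> I n k" "s permutes {1..n}" "t permutes {1..n}"
      "cyc_min n s = M" "cyc_min n t = M" unfolding B_def by auto
    then show "x \<in> {(\<sigma>, \<tau>). \<sigma> permutes {1..n} \<and> \<tau> permutes {1..n}
            \<and> num_cycles n \<sigma> = k \<and> num_cycles n \<tau> = k \<and> cyc_min n \<sigma> = cyc_min n \<tau>}"
      using num_cycles_eq[OF a(3)] num_cycles_eq[OF a(4)] unfolding I_def by auto
  qed
  have "card (\<Union>M\<in>I n k. B n M \<times> B n M) = (\<Sum>M\<in>I n k. card (B n M \<times> B n M))"
  proof (rule card_UN_disjoint)
    show "finite (I n k)" by (rule finite_I)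
    show "\<forall>M\<in>I n k. finite (B n M \<times> B n M)" using finite_B by simp
    show "\<forall>M1\<in>I n k. \<forall>M2\<in>I n k. M1 \<noteq> M2 \<longrightarrow> (B n M1 \<times> B n M1) \<inter> (B n M2 \<times> B n M2) = {}"
    proof (intro ballI impI)
      fix M1 M2 :: "nat set" assume "M1 \<noteq> M2"
      then have "B n M1 \<inter> B n M2 = {}" unfolding B_def by blast
      then show "(B n M1 \<times> B n M1) \<inter> (B n M2 \<times> B n M2) = {}" by blast
    qed
  qed
  also have "\<dots> = G n k" unfolding G_def F_def by (simp add: card_cartesian_product power2_eq_square)
  finally show ?thesis using eq by simp
qed

theorem corollary17:
  fixes n k :: nat
  assumes "1 \<le> k" and "k \<le> n"
  shows "nat \<bar>u n k\<bar> = card {(\<sigma>, \<tau>). \<sigma> permutes {1..n} \<and> \<tau> permutes {1..n}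
            \<and> num_cycles n \<sigma> = k \<and> num_cycles n \<tau> = k \<and> cyc_min n \<sigma> = cyc_min n \<tau>}"
  unfolding pairs_card u_G by (simp add: abs_mult)

end
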